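(* For any $0<p<\frac{1}{2}$ and any confidence threshold $0<\delta<\frac{1}{2}$, there exists an adaptive noisy binary search algorithm for any linear order of $n$ elements that, after $$\frac{1}{I(p)}\left(\log_2 n+\mathcal{O}\big(\sqrt{\log n\log \delta^{-1}}\big)+\mathcal{O}(\log\delta^{-1})\right)$$ queries, returns the target correctly with probability at least $1-\delta$, for every choice of the target.
   Context: Noisy binary search model: the search space is a linear order $\{1,\dots,n\}$ containing an unknown target $v^*$, fixed in advance by an adversary who knows the algorithm. In each step the algorithm chooses an element $q$ and asks a comparison query, whose correct answer is "$<$" if $v^*<q$ and "$>$" otherwise. Each answer is, independently, incorrect (the opposite answer) with probability $p$ and correct with probability $1-p$. The algorithm is adaptive. $H(p)=-p\log_2 p-(1-p)\log_2(1-p)$ and $I(p)=1-H(p)$. *)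

theory Defs
  imports "HOL-Probability.Probability"
begin

definition H :: "real \<Rightarrow> real" where
  "H p = - p * log 2 p - (1 - p) * log 2 (1 - p)"

definition I :: "real \<Rightarrow> real" where
  "I p = 1 - H p"

text \<open>A deterministic adaptive algorithm is a decision tree: an inner node asks the
comparison query at element q; the left subtree is followed on answer "<",
the right subtree on answer ">".\<close>
datatype qtree = Leaf nat | Query nat qtree qtree

fun depth :: "qtree \<Rightarrow> nat" where
  "depth (Leaf x) = 0"
| "depth (Query q l r) = Suc (max (depth l) (depth r))"

fun succ_prob :: "real \<Rightarrow> nat \<Rightarrow> qtree \<Rightarrow> real" where
  "succ_prob p v (Leaf x) = (if x = v then 1 else 0)"
| "succ_prob p v (Query q l r) =
     (if v < q then (1 - p) * succ_prob p v l + p * succ_prob p v r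
      else p * succ_prob p v l + (1 - p) * succ_prob p v r)"

text \<open>A randomized adaptive algorithm is a probability distribution over decision trees.\<close>
definition rand_succ_prob :: "real \<Rightarrow> nat \<Rightarrow> qtree pmf \<Rightarrow> real" where
  "rand_succ_prob p v D = measure_pmf.expectation D (\<lambda>T. succ_prob p v T)"

end

theory Submission
  imports Defs
begin


definition Wsum :: "nat \<Rightarrow> (nat \<Rightarrow> real) \<Rightarrow> real" where
  "Wsum n w = (\<Sum>u\<in>{1..n}. w u)"

definition LS :: "nat \<Rightarrow> (nat \<Rightarrow> real) \<Rightarrow> nat \<Rightarrow> real" where
  "LS n w q = (\<Sum>u\<in>{u\<in>{1..n}. u < q}. w u)"

definition med :: "nat \<Rightarrow> (nat \<Rightarrow> real) \<Rightarrow> nat" where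
  "med n w = (LEAST x. 1 \<le> x \<and> x \<le> n \<and> Wsum n w \<le> 2 * (\<Sum>u\<in>{1..x}. w u))"

definition piw :: "nat \<Rightarrow> (nat \<Rightarrow> real) \<Rightarrow> real" where
  "piw n w = (let x = med n w; A = LS n w x; B = Wsum n w - A - w x in (B - A + w x) / (2 * w x))"

definition upd :: "real \<Rightarrow> (nat \<Rightarrow> real) \<Rightarrow> nat \<Rightarrow> bool \<Rightarrow> nat \<Rightarrow> real" where
  "upd p w q b = (\<lambda>u. (if (u < q) = b then 1 - p else p) * w u)"

definition qof :: "nat \<Rightarrow> (nat \<Rightarrow> real) \<Rightarrow> bool \<Rightarrow> nat" where
  "qof n w b = (if b then med n w + 1 else med n w)"

fun rt :: "real \<Rightarrow> nat \<Rightarrow> nat \<Rightarrow> (nat \<Rightarrow> real) \<Rightarrow> qtree pmf" where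
  "rt p n 0 w = return_pmf (Leaf (med n w))"
| "rt p n (Suc k) w = bernoulli_pmf (piw n w) \<bind> (\<lambda>b.
     rt p n k (upd p w (qof n w b) True) \<bind> (\<lambda>l.
     rt p n k (upd p w (qof n w b) False) \<bind> (\<lambda>r.
     return_pmf (Query (qof n w b) l r))))"

lemma rt_depth: "T \<in> set_pmf (rt p n k w) \<Longrightarrow> depth T = k"
  by (induction k arbitrary: w T) (auto simp: set_bind_pmf)

lemma rt_finite: "finite (set_pmf (rt p n k w))"
  by (induction k arbitrary: w) (auto simp: set_bind_pmf)

lemma exp_query:
  fixes L R :: "qtree pmf"
  assumes "finite (set_pmf L)" "finite (set_pmf R)"
  shows "measure_pmf.expectation (L \<bind> (\<lambda>l. R \<bind> (\<lambda>r. return_pmf (Query q l r)))) (succ_prob p v)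
    = (if v < q then (1-p) * measure_pmf.expectation L (succ_prob p v) + p * measure_pmf.expectation R (succ_prob p v)
       else p * measure_pmf.expectation L (succ_prob p v) + (1-p) * measure_pmf.expectation R (succ_prob p v))"
proof -
  have eL: "measure_pmf.expectation L (succ_prob p v) = (\<Sum>a\<in>set_pmf L. pmf L a * succ_prob p v a)"
    using assms by (subst integral_measure_pmf[of "set_pmf L"]) auto
  have eR: "measure_pmf.expectation R (succ_prob p v) = (\<Sum>a\<in>set_pmf R. pmf R a * succ_prob p v a)"
    using assms by (subst integral_measure_pmf[of "set_pmf R"]) auto
  have sL: "(\<Sum>a\<in>set_pmf L. pmf L a) = 1" using assms sum_pmf_eq_1 by blast
  have sR: "(\<Sum>a\<in>set_pmf R. pmf R a) = 1" using assms sum_pmf_eq_1 by blast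
  have inner: "measure_pmf.expectation (R \<bind> (\<lambda>r. return_pmf (Query q l r))) (succ_prob p v)
     = (\<Sum>b\<in>set_pmf R. pmf R b * succ_prob p v (Query q l b))" for l
    using assms by (subst pmf_expectation_bind[of "set_pmf R"]) auto
  have "measure_pmf.expectation (L \<bind> (\<lambda>l. R \<bind> (\<lambda>r. return_pmf (Query q l r)))) (succ_prob p v)
     = (\<Sum>a\<in>set_pmf L. pmf L a * (\<Sum>b\<in>set_pmf R. pmf R b * succ_prob p v (Query q a b)))"
    using assms by (subst pmf_expectation_bind[of "set_pmf L"]) (auto simp: inner set_bind_pmf)
  also have "\<dots> = (\<Sum>a\<in>set_pmf L. pmf L a * (if v < q then (1-p) * succ_prob p v a + p * (\<Sum>b\<in>set_pmf R. pmf R b * succ_prob p v b)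
       else p * succ_prob p v a + (1-p) * (\<Sum>b\<in>set_pmf R. pmf R b * succ_prob p v b)))"
  proof (intro sum.cong refl, goal_cases)
    case (1 a)
    define cA where "cA = (if v < q then 1-p else p)"
    define cB where "cB = (if v < q then p else 1-p)"
    have "(\<Sum>b\<in>set_pmf R. pmf R b * succ_prob p v (Query q a b))
       = (\<Sum>b\<in>set_pmf R. cA * succ_prob p v a * pmf R b + cB * (pmf R b * succ_prob p v b))"
      by (intro sum.cong refl) (auto simp: cA_def cB_def algebra_simps)
    also have "\<dots> = cA * succ_prob p v a * (\<Sum>b\<in>set_pmf R. pmf R b) + cB * (\<Sum>b\<in>set_pmf R. pmf R b * succ_prob p v b)"
      by (simp add: sum.distrib sum_distrib_left)
    finally show ?case using sR by (auto simp: cA_def cB_def)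
  qed
  also have "\<dots> = (if v < q then (1-p) * (\<Sum>a\<in>set_pmf L. pmf L a * succ_prob p v a) + p * (\<Sum>b\<in>set_pmf R. pmf R b * succ_prob p v b)
       else p * (\<Sum>a\<in>set_pmf L. pmf L a * succ_prob p v a) + (1-p) * (\<Sum>b\<in>set_pmf R. pmf R b * succ_prob p v b))"
  proof -
    define cA where "cA = (if v < q then 1-p else p)"
    define cB where "cB = (if v < q then p else 1-p)"
    define SR where "SR = (\<Sum>b\<in>set_pmf R. pmf R b * succ_prob p v b)"
    have "(\<Sum>a\<in>set_pmf L. pmf L a * (if v < q then (1-p) * succ_prob p v a + p * SR else p * succ_prob p v a + (1-p) * SR))
      = (\<Sum>a\<in>set_pmf L. cA * (pmf L a * succ_prob p v a) + (cB * SR) * pmf L a)"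
      by (intro sum.cong refl) (auto simp: cA_def cB_def algebra_simps)
    also have "\<dots> = cA * (\<Sum>a\<in>set_pmf L. pmf L a * succ_prob p v a) + cB * SR * (\<Sum>a\<in>set_pmf L. pmf L a)"
      by (simp add: sum.distrib sum_distrib_left)
    finally show ?thesis using sL by (auto simp: cA_def cB_def SR_def)
  qed
  finally show ?thesis using eL eR by simp
qed



lemma tangent_powr:
  fixes y y0 l :: real
  assumes "0 \<le> y" "0 < y0" "0 < l" "l \<le> 1"
  shows "y powr l \<le> y0 powr l + l * y0 powr (l - 1) * (y - y0)"
proof (cases "y = 0")
  case True
  have "y0 powr (l - 1) * y0 = y0 powr l"
    using assms by (simp add: powr_diff)
  then show ?thesis using True assms
    by (simp add: algebra_simps)
next
  case False
  then have ypos: "y > 0" using assms by simp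
  have "(y / y0) powr l * 1 powr (1 - l) \<le> l * (y / y0) + (1 - l) * 1"
    using assms ypos by (intro Youngs_inequality_0) auto
  then have "(y / y0) powr l \<le> l * (y / y0) + (1 - l)" by simp
  then have "y0 powr l * (y / y0) powr l \<le> y0 powr l * (l * (y / y0) + (1 - l))"
    by (intro mult_left_mono) auto
  moreover have "y0 powr l * (y / y0) powr l = y powr l"
    using assms ypos by (simp add: powr_divide)
  moreover have "y0 powr l * (l * (y / y0) + (1 - l)) = y0 powr l + l * y0 powr (l - 1) * (y - y0)"
  proof -
    have e: "y0 powr l = y0 powr (l - 1) * y0" using assms by (simp add: powr_diff)
    show ?thesis unfolding e using assms by (simp add: field_simps)
  qed
  ultimately show ?thesis by simp
qed

definition gfun :: "real \<Rightarrow> real \<Rightarrow> real" where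
  "gfun p l = (1-p) * (1 / (2*(1-p))) powr l + p * (1 / (2*p)) powr l"

lemma key_step:
  fixes p l \<pi> e1 e0 t :: real
  assumes p: "0 < p" "p < 1/2" and l: "0 < l" "l \<le> 1" and pi: "0 \<le> \<pi>" "\<pi> \<le> 1"
    and e: "0 \<le> e1" "e1 \<le> t" "0 \<le> e0" "e0 \<le> t" "0 < t" and avg: "\<pi> * e1 + (1 - \<pi>) * e0 \<le> t / 2"
  shows "\<pi> * ((1-p) * (e1 + p/(1-p) * (t - e1)) powr l + p * (e1 + (1-p)/p * (t - e1)) powr l)
       + (1-\<pi>) * ((1-p) * (e0 + p/(1-p) * (t - e0)) powr l + p * (e0 + (1-p)/p * (t - e0)) powr l)
       \<le> gfun p l * t powr l"
proof -
  define c0 where "c0 = t / (2*(1-p))"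
  define c1 where "c1 = t / (2*p)"
  define P where "P = c0 powr (l - 1)"
  define Q where "Q = c1 powr (l - 1)"
  have c0p: "c0 > 0" and c1p: "c1 > 0" using p e by (auto simp: c0_def c1_def)
  have c01: "c0 \<le> c1" using p e unfolding c0_def c1_def by (intro divide_left_mono) auto
  have PQ: "Q \<le> P" unfolding P_def Q_def using l c0p c01 by (intro powr_mono2') auto
  define y1c where "y1c = e1 + p/(1-p) * (t - e1)"
  define y0c where "y0c = e0 + p/(1-p) * (t - e0)"
  define y1w where "y1w = e1 + (1-p)/p * (t - e1)"
  define y0w where "y0w = e0 + (1-p)/p * (t - e0)"
  have nn: "0 \<le> y1c" "0 \<le> y0c" "0 \<le> y1w" "0 \<le> y0w"
    using p e unfolding y1c_def y0c_def y1w_def y0w_def by auto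
  have t1: "y1c powr l \<le> c0 powr l + l * P * (y1c - c0)"
    unfolding P_def by (rule tangent_powr) (use nn c0p l in auto)
  have t2: "y0c powr l \<le> c0 powr l + l * P * (y0c - c0)"
    unfolding P_def by (rule tangent_powr) (use nn c0p l in auto)
  have t3: "y1w powr l \<le> c1 powr l + l * Q * (y1w - c1)"
    unfolding Q_def by (rule tangent_powr) (use nn c1p l in auto)
  have t4: "y0w powr l \<le> c1 powr l + l * Q * (y0w - c1)"
    unfolding Q_def by (rule tangent_powr) (use nn c1p l in auto)
  define eb where "eb = \<pi> * e1 + (1 - \<pi>) * e0"
  have "\<pi> * ((1-p) * y1c powr l + p * y1w powr l) + (1-\<pi>) * ((1-p) * y0c powr l + p * y0w powr l)
     \<le> \<pi> * ((1-p) * (c0 powr l + l * P * (y1c - c0)) + p * (c1 powr l + l * Q * (y1w - c1)))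
       + (1-\<pi>) * ((1-p) * (c0 powr l + l * P * (y0c - c0)) + p * (c1 powr l + l * Q * (y0w - c1)))"
    using t1 t2 t3 t4 p pi
    by (intro add_mono mult_left_mono) auto
  also have "\<dots> = (1-p) * c0 powr l + p * c1 powr l
       + l * P * ((1-p) * (\<pi> * y1c + (1-\<pi>) * y0c - c0)) + l * Q * (p * (\<pi> * y1w + (1-\<pi>) * y0w - c1))"
    by (simp add: algebra_simps)
  also have "(1-p) * (\<pi> * y1c + (1-\<pi>) * y0c - c0) = (1 - 2*p) * (eb - t/2)"
  proof -
    define th where "th = p/(1-p)"
    have a: "\<pi> * y1c + (1-\<pi>) * y0c = eb + th * (t - eb)"
      unfolding y1c_def y0c_def eb_def th_def[symmetric] by (simp add: algebra_simps)
    have b: "(1-p) * th = p" using p unfolding th_def by simp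
    have c: "(1-p) * c0 = t/2" using p unfolding c0_def by (simp add: field_simps)
    have "(1-p) * (eb + th * (t - eb) - c0) = (1-p)*eb + ((1-p)*th) * (t - eb) - (1-p)*c0"
      by (simp add: algebra_simps)
    also have "\<dots> = (1 - 2*p) * (eb - t/2)" unfolding b c by (simp add: algebra_simps)
    finally show ?thesis using a by simp
  qed
  also have "p * (\<pi> * y1w + (1-\<pi>) * y0w - c1) = - ((1 - 2*p) * (eb - t/2))"
  proof -
    define th where "th = (1-p)/p"
    have a: "\<pi> * y1w + (1-\<pi>) * y0w = eb + th * (t - eb)"
      unfolding y1w_def y0w_def eb_def th_def[symmetric] by (simp add: algebra_simps)
    have b: "p * th = 1-p" using p unfolding th_def by simp
    have c: "p * c1 = t/2" using p unfolding c1_def by (simp add: field_simps)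
    have "p * (eb + th * (t - eb) - c1) = p*eb + (p*th) * (t - eb) - p*c1"
      by (simp add: algebra_simps)
    also have "\<dots> = - ((1 - 2*p) * (eb - t/2))" unfolding b c by (simp add: algebra_simps)
    finally show ?thesis using a by simp
  qed
  also have "(1-p) * c0 powr l + p * c1 powr l
       + l * P * ((1 - 2*p) * (eb - t/2)) + l * Q * (- ((1 - 2*p) * (eb - t/2)))
     = (1-p) * c0 powr l + p * c1 powr l + l * (1 - 2*p) * (eb - t/2) * (P - Q)"
  proof -
    define z where "z = (1 - 2*p) * (eb - t/2)"
    have "l * P * z + l * Q * (- z) = l * z * (P - Q)" by (simp add: algebra_simps)
    then show ?thesis unfolding z_def by (simp add: mult.assoc)
  qed
  also have "\<dots> \<le> (1-p) * c0 powr l + p * c1 powr l"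
  proof -
    have "l * (1 - 2*p) * (t/2 - eb) * (P - Q) \<ge> 0"
      using l p PQ avg unfolding eb_def by (intro mult_nonneg_nonneg) auto
    then show ?thesis by (simp add: algebra_simps)
  qed
  also have "\<dots> = gfun p l * t powr l"
  proof -
    have a: "c0 = (1/(2*(1-p))) * t" by (simp add: c0_def)
    have b: "c1 = (1/(2*p)) * t" by (simp add: c1_def)
    have a': "c0 powr l = (1/(2*(1-p))) powr l * t powr l"
      unfolding a using p e powr_mult[of "1/(2*(1-p))" t l] by simp
    have b': "c1 powr l = (1/(2*p)) powr l * t powr l"
      unfolding b using p e powr_mult[of "1/(2*p)" t l] by simp
    show ?thesis unfolding a' b' gfun_def by (simp add: algebra_simps)
  qed
  finally show ?thesis unfolding y1c_def y0c_def y1w_def y0w_def .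
qed



definition mu :: "real \<Rightarrow> real" where
  "mu p = - (1-p) * ln (1-p) - p * ln p"

lemma ln_less_minus_one: "0 < (x::real) \<Longrightarrow> x \<noteq> 1 \<Longrightarrow> ln x < x - 1"
proof -
  assume x: "0 < x" "x \<noteq> 1"
  have s: "sqrt x > 0" using x by simp
  have "ln x = 2 * ln (sqrt x)" using x by (simp add: ln_sqrt)
  also have "\<dots> \<le> 2 * (sqrt x - 1)" using ln_le_minus_one[OF s] by simp
  also have "\<dots> < x - 1"
  proof -
    have "sqrt x \<noteq> 1" using x by auto
    then have "(sqrt x - 1)^2 > 0" by simp
    then show ?thesis using x by (simp add: power2_eq_square algebra_simps)
  qed
  finally show ?thesis .
qed

lemma mu_lt: assumes "0 < p" "p < 1/2" shows "mu p < ln 2"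
proof -
  have h1: "ln (1/(2*(1-p))) < 1/(2*(1-p)) - 1"
    using assms by (intro ln_less_minus_one) (auto simp: field_simps)
  have h2: "ln (1/(2*p)) \<le> 1/(2*p) - 1"
    using assms by (intro ln_le_minus_one) auto
  have e1: "ln (1/(2*(1-p))) = - ln 2 - ln (1-p)" using assms ln_mult[of 2 "1-p"] by (simp add: ln_div)
  have e2: "ln (1/(2*p)) = - ln 2 - ln p" using assms ln_mult[of 2 p] by (simp add: ln_div)
  have "(1-p) * ln (1/(2*(1-p))) < (1-p) * (1/(2*(1-p)) - 1)"
    using h1 assms by (intro mult_strict_left_mono) auto
  moreover have "p * ln (1/(2*p)) \<le> p * (1/(2*p) - 1)"
    using h2 assms by (intro mult_left_mono) auto
  moreover have "(1-p) * (1/(2*(1-p)) - 1) + p * (1/(2*p) - 1) = 0"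
    using assms by (simp add: field_simps)
  ultimately have "(1-p) * ln (1/(2*(1-p))) + p * ln (1/(2*p)) < 0" by linarith
  then show ?thesis unfolding e1 e2 mu_def by (simp add: algebra_simps)
qed

lemma I_eq: assumes "0 < p" "p < 1/2" shows "I p = (ln 2 - mu p) / ln 2"
  unfolding I_def H_def mu_def log_def by (simp add: field_simps)

lemma g_bound:
  assumes p: "0 < p" "p < 1/2" and l: "0 < l" "l * (- ln p) \<le> 1"
  shows "gfun p l \<le> exp (- l * (ln 2 - mu p) + l^2 * (ln p)^2)"
proof -
  define a where "a = - ln (1-p)"
  define b where "b = - ln p"
  have a0: "0 \<le> a" unfolding a_def using p by simp
  have ab: "a \<le> b" unfolding a_def b_def using p by simp
  have la: "l * a \<le> 1" using l ab a0 unfolding b_def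
    by (meson dual_order.trans less_eq_real_def mult_left_mono)
  have e1: "ln (1/(2*(1-p))) = - ln 2 + a" using p ln_mult[of 2 "1-p"] by (simp add: ln_div a_def)
  have e2: "ln (1/(2*p)) = - ln 2 + b" using p ln_mult[of 2 p] by (simp add: ln_div b_def)
  have pw1: "(1/(2*(1-p))) powr l = exp (- l * ln 2) * exp (l * a)"
  proof -
    have "(1/(2*(1-p))) powr l = exp (l * ln (1/(2*(1-p))))" using p by (simp add: powr_def)
    also have "\<dots> = exp (- l * ln 2) * exp (l * a)" unfolding e1 by (simp add: exp_add[symmetric] algebra_simps)
    finally show ?thesis .
  qed
  have pw2: "(1/(2*p)) powr l = exp (- l * ln 2) * exp (l * b)"
  proof -
    have "(1/(2*p)) powr l = exp (l * ln (1/(2*p)))" using p by (simp add: powr_def)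
    also have "\<dots> = exp (- l * ln 2) * exp (l * b)" unfolding e2 by (simp add: exp_add[symmetric] algebra_simps)
    finally show ?thesis .
  qed
  have x1: "exp (l * a) \<le> 1 + l * a + (l * a)^2" using la a0 l by (intro exp_bound) auto
  have lb0: "0 \<le> l * b" using l a0 ab by simp
  have x2: "exp (l * b) \<le> 1 + l * b + (l * b)^2" using l lb0 unfolding b_def by (intro exp_bound) auto
  have sq: "a^2 \<le> b^2" using a0 ab by (simp add: power_mono)
  have "(1-p) * exp (l * a) + p * exp (l * b) \<le> (1-p) * (1 + l * a + (l * a)^2) + p * (1 + l * b + (l * b)^2)"
    using x1 x2 p by (intro add_mono mult_left_mono) auto
  also have "\<dots> = 1 + l * ((1-p) * a + p * b) + l^2 * ((1-p) * a^2 + p * b^2)"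
    by (simp add: algebra_simps power2_eq_square)
  also have "\<dots> \<le> 1 + l * mu p + l^2 * b^2"
  proof -
    have "(1-p) * a^2 + p * b^2 \<le> (1-p) * b^2 + p * b^2"
      using sq p by (intro add_mono mult_left_mono) auto
    then have "l^2 * ((1-p) * a^2 + p * b^2) \<le> l^2 * ((1-p) * b^2 + p * b^2)"
      by (intro mult_left_mono) auto
    then have "l^2 * ((1-p) * a^2 + p * b^2) \<le> l^2 * b^2"
      by (simp add: algebra_simps)
    moreover have "(1-p) * a + p * b = mu p" unfolding mu_def a_def b_def by (simp add: algebra_simps)
    ultimately show ?thesis by simp
  qed
  also have "\<dots> \<le> exp (l * mu p + l^2 * b^2)"
    using exp_ge_add_one_self by (simp add: add.assoc)
  finally have main: "(1-p) * exp (l * a) + p * exp (l * b) \<le> exp (l * mu p + l^2 * b^2)" .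
  have "gfun p l = exp (- l * ln 2) * ((1-p) * exp (l * a) + p * exp (l * b))"
    unfolding gfun_def pw1 pw2 by (simp add: algebra_simps)
  also have "\<dots> \<le> exp (- l * ln 2) * exp (l * mu p + l^2 * b^2)"
    using main by (intro mult_left_mono) auto
  also have "\<dots> = exp (- l * (ln 2 - mu p) + l^2 * (ln p)^2)"
    unfolding b_def by (simp add: exp_add[symmetric] algebra_simps)
  finally show ?thesis .
qed

lemma gfun_nonneg: "0 < p \<Longrightarrow> p < 1/2 \<Longrightarrow> 0 \<le> gfun p l"
  unfolding gfun_def by (intro add_nonneg_nonneg mult_nonneg_nonneg) auto



definition S :: "nat \<Rightarrow> (nat \<Rightarrow> real) \<Rightarrow> nat \<Rightarrow> real" where
  "S n w v = (Wsum n w - w v) / w v"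

lemma LS_compl: "Wsum n w - LS n w q = (\<Sum>u\<in>{u\<in>{1..n}. \<not> u < q}. w u)"
proof -
  have "Wsum n w = (\<Sum>u\<in>{1..n} \<inter> {u. u < q}. w u) + (\<Sum>u\<in>{1..n} - {u. u < q}. w u)"
    unfolding Wsum_def by (rule sum.Int_Diff) simp
  moreover have "{1..n} \<inter> {u. u < q} = {u\<in>{1..n}. u < q}" by auto
  moreover have "{1..n} - {u. u < q} = {u\<in>{1..n}. \<not> u < q}" by auto
  ultimately show ?thesis unfolding LS_def by simp
qed

lemma sum_split_q:
  "(\<Sum>u\<in>{1..n}. (if u < q then c1 else c2) * w u) = c1 * LS n w q + c2 * (Wsum n w - LS n w q)"
proof -
  have "(\<Sum>u\<in>{1..n}. (if u < q then c1 else c2) * w u)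
     = (\<Sum>u\<in>{1..n} \<inter> {u. u < q}. (if u < q then c1 else c2) * w u) + (\<Sum>u\<in>{1..n} - {u. u < q}. (if u < q then c1 else c2) * w u)"
    by (rule sum.Int_Diff) simp
  also have "(\<Sum>u\<in>{1..n} \<inter> {u. u < q}. (if u < q then c1 else c2) * w u) = (\<Sum>u\<in>{u\<in>{1..n}. u < q}. c1 * w u)"
    by (rule sum.cong) auto
  also have "(\<Sum>u\<in>{1..n} - {u. u < q}. (if u < q then c1 else c2) * w u) = (\<Sum>u\<in>{u\<in>{1..n}. \<not> u < q}. c2 * w u)"
    by (rule sum.cong) auto
  finally have *: "(\<Sum>u\<in>{1..n}. (if u < q then c1 else c2) * w u) = (\<Sum>u\<in>{u\<in>{1..n}. u < q}. c1 * w u) + (\<Sum>u\<in>{u\<in>{1..n}. \<not> u < q}. c2 * w u)" .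
  have e: "c2 * (Wsum n w - LS n w q) = (\<Sum>u\<in>{u\<in>{1..n}. \<not> u < q}. c2 * w u)"
    by (simp only: LS_compl sum_distrib_left)
  have e1: "c1 * LS n w q = (\<Sum>u\<in>{u\<in>{1..n}. u < q}. c1 * w u)"
    by (simp only: LS_def sum_distrib_left)
  show ?thesis using * e e1 by simp
qed

lemma Wsum_upd: "Wsum n (upd p w q b) =
   (if b then (1-p) * LS n w q + p * (Wsum n w - LS n w q) else p * LS n w q + (1-p) * (Wsum n w - LS n w q))"
proof (cases b)
  case True
  then have "Wsum n (upd p w q b) = (\<Sum>u\<in>{1..n}. (if u < q then 1-p else p) * w u)"
    unfolding Wsum_def upd_def by simp
  then show ?thesis using True sum_split_q by simp
next
  case False
  then have "Wsum n (upd p w q b) = (\<Sum>u\<in>{1..n}. (if u < q then p else 1-p) * w u)"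
    unfolding Wsum_def upd_def by (intro sum.cong) auto
  then show ?thesis using False sum_split_q by simp
qed

lemma upd_pos: "0 < p \<Longrightarrow> p < 1 \<Longrightarrow> \<forall>u\<in>{1..n}. 0 < w u \<Longrightarrow> \<forall>u\<in>{1..n}. 0 < upd p w q b u"
  unfolding upd_def by auto

lemma med_props:
  assumes "1 \<le> n" "\<forall>u\<in>{1..n}. 0 \<le> w u"
  shows "1 \<le> med n w" "med n w \<le> n" "2 * LS n w (med n w) \<le> Wsum n w"
    "2 * (Wsum n w - LS n w (med n w) - w (med n w)) \<le> Wsum n w"
proof -
  define P where "P = (\<lambda>x. 1 \<le> x \<and> x \<le> n \<and> Wsum n w \<le> 2 * (\<Sum>u\<in>{1..x}. w u))"
  have W0: "0 \<le> Wsum n w" unfolding Wsum_def using assms by (intro sum_nonneg) auto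
  have Pn: "P n" unfolding P_def using assms W0 by (simp add: Wsum_def)
  have mdef: "med n w = (LEAST x. P x)" unfolding med_def P_def by simp
  have Pm: "P (med n w)" unfolding mdef using Pn by (rule LeastI)
  define x where "x = med n w"
  have x1: "1 \<le> x" and xn: "x \<le> n" and xW: "Wsum n w \<le> 2 * (\<Sum>u\<in>{1..x}. w u)"
    using Pm unfolding P_def x_def by auto
  have LSx: "LS n w x = (\<Sum>u\<in>{1..x-1}. w u)"
  proof -
    have "{u\<in>{1..n}. u < x} = {1..x-1}" using xn x1 by auto
    then show ?thesis unfolding LS_def by simp
  qed
  have split: "(\<Sum>u\<in>{1..x}. w u) = (\<Sum>u\<in>{1..x-1}. w u) + w x"
  proof -
    have "{1..x} = insert x {1..x-1}" using x1 by auto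
    moreover have "x \<notin> {1..x-1}" using x1 by auto
    ultimately show ?thesis by (simp add: add.commute)
  qed
  show "1 \<le> med n w" "med n w \<le> n" using x1 xn x_def by auto
  show "2 * (Wsum n w - LS n w (med n w) - w (med n w)) \<le> Wsum n w"
    using xW split LSx unfolding x_def[symmetric] by simp
  show "2 * LS n w (med n w) \<le> Wsum n w"
  proof (cases "x = 1")
    case True
    then show ?thesis using LSx W0 x_def by simp
  next
    case False
    then have "x - 1 < x" using x1 by simp
    then have "\<not> P (x - 1)" unfolding x_def mdef by (rule not_less_Least)
    then have "\<not> Wsum n w \<le> 2 * (\<Sum>u\<in>{1..x-1}. w u)" unfolding P_def using False x1 xn by auto
    then show ?thesis using LSx x_def by simp
  qed
qed

lemma LS_Suc:
  assumes "1 \<le> x" "x \<le> n" shows "LS n w (x + 1) = LS n w x + w x"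
proof -
  have "{u\<in>{1..n}. u < x + 1} = insert x {u\<in>{1..n}. u < x}" using assms by auto
  then show ?thesis unfolding LS_def by simp
qed



definition Ex :: "real \<Rightarrow> nat \<Rightarrow> nat \<Rightarrow> nat \<Rightarrow> (nat \<Rightarrow> real) \<Rightarrow> real" where
  "Ex p n k v w = measure_pmf.expectation (rt p n k w) (succ_prob p v)"

definition Fq :: "real \<Rightarrow> nat \<Rightarrow> nat \<Rightarrow> nat \<Rightarrow> (nat \<Rightarrow> real) \<Rightarrow> nat \<Rightarrow> real" where
  "Fq p n k v w q = (1-p) * Ex p n k v (upd p w q (v < q)) + p * Ex p n k v (upd p w q (\<not> v < q))"

lemma E_Suc:
  assumes "0 \<le> piw n w" "piw n w \<le> 1"
  shows "Ex p n (Suc k) v w = piw n w * Fq p n k v w (qof n w True) + (1 - piw n w) * Fq p n k v w (qof n w False)"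
proof -
  define G where "G = (\<lambda>b. rt p n k (upd p w (qof n w b) True) \<bind> (\<lambda>l.
     rt p n k (upd p w (qof n w b) False) \<bind> (\<lambda>r. return_pmf (Query (qof n w b) l r))))"
  have rtS: "rt p n (Suc k) w = bernoulli_pmf (piw n w) \<bind> G" unfolding G_def by simp
  have fin: "finite (set_pmf (G b))" for b unfolding G_def by (auto simp: set_bind_pmf rt_finite)
  have eG: "measure_pmf.expectation (G b) (succ_prob p v) = Fq p n k v w (qof n w b)" for b
    unfolding G_def Fq_def Ex_def by (subst exp_query) (auto simp: rt_finite)
  have "Ex p n (Suc k) v w = (\<Sum>a\<in>UNIV. pmf (bernoulli_pmf (piw n w)) a *\<^sub>R measure_pmf.expectation (G a) (succ_prob p v))"
    unfolding Ex_def rtS by (rule pmf_expectation_bind) (auto simp: fin)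
  also have "\<dots> = piw n w * Fq p n k v w (qof n w True) + (1 - piw n w) * Fq p n k v w (qof n w False)"
    using assms by (simp add: UNIV_bool eG)
  finally show ?thesis .
qed

lemma piw_range:
  assumes "1 \<le> n" "\<forall>u\<in>{1..n}. 0 < w u"
  shows "0 \<le> piw n w" "piw n w \<le> 1"
proof -
  define x where "x = med n w"
  define A where "A = LS n w x"
  define B where "B = Wsum n w - A - w x"
  have nn: "\<forall>u\<in>{1..n}. 0 \<le> w u" using assms by auto
  have x: "1 \<le> x" "x \<le> n" "2 * A \<le> Wsum n w" "2 * B \<le> Wsum n w"
    using med_props[OF assms(1) nn] unfolding x_def A_def B_def by auto
  have wx: "0 < w x" using assms x by auto
  have pw: "piw n w = (B - A + w x) / (2 * w x)" unfolding piw_def x_def A_def B_def Let_def by simp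
  show "0 \<le> piw n w" unfolding pw using wx x B_def by (intro divide_nonneg_pos) auto
  show "piw n w \<le> 1" unfolding pw using wx x B_def by (simp add: divide_le_eq)
qed



definition Same :: "nat \<Rightarrow> (nat \<Rightarrow> real) \<Rightarrow> nat \<Rightarrow> nat \<Rightarrow> real" where
  "Same n w v q = (if v < q then LS n w q else Wsum n w - LS n w q)"

lemma Wv_pos:
  assumes "2 \<le> n" "\<forall>u\<in>{1..n}. 0 < w u" "v \<in> {1..n}"
  shows "0 < Wsum n w - w v"
proof -
  define u :: nat where "u = (if v = 1 then 2 else 1)"
  have u: "u \<in> {1..n} - {v}" using assms unfolding u_def by auto
  have nn: "\<forall>u\<in>{1..n}. 0 \<le> w u" using assms by auto
  have "Wsum n w - w v = (\<Sum>u\<in>{1..n} - {v}. w u)" unfolding Wsum_def using assms(3) by (simp add: sum_diff1)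
  moreover have "w u \<le> (\<Sum>u\<in>{1..n} - {v}. w u)" using u nn by (intro member_le_sum) auto
  moreover have "0 < w u" using u assms by auto
  ultimately show ?thesis by linarith
qed

lemma Same_bounds:
  assumes "\<forall>u\<in>{1..n}. 0 < w u" "v \<in> {1..n}"
  shows "w v \<le> Same n w v q" "Same n w v q \<le> Wsum n w"
proof -
  have nn: "\<forall>u\<in>{1..n}. 0 \<le> w u" using assms by auto
  have c: "0 \<le> Wsum n w - LS n w q" unfolding LS_compl using assms nn by (intro sum_nonneg) auto
  have l0: "0 \<le> LS n w q" unfolding LS_def using assms nn by (intro sum_nonneg) auto
  show "w v \<le> Same n w v q"
  proof (cases "v < q")
    case True
    then have "w v \<le> LS n w q" unfolding LS_def using assms nn by (intro member_le_sum) auto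
    then show ?thesis using True unfolding Same_def by simp
  next
    case False
    then have "w v \<le> Wsum n w - LS n w q" unfolding LS_compl using assms nn by (intro member_le_sum) auto
    then show ?thesis using False unfolding Same_def by simp
  qed
  show "Same n w v q \<le> Wsum n w" unfolding Same_def using c l0 by auto
qed

lemma med_eq:
  assumes "1 \<le> n" "\<forall>u\<in>{1..n}. 0 < w u" "v \<in> {1..n}" "Wsum n w < 2 * w v"
  shows "med n w = v"
proof (rule ccontr)
  assume ne: "med n w \<noteq> v"
  define x where "x = med n w"
  have nn: "\<forall>u\<in>{1..n}. 0 \<le> w u" using assms by auto
  note mp = med_props[OF assms(1) nn]
  show False
  proof (cases "v < x")
    case True
    then have "w v \<le> LS n w x" unfolding LS_def using assms nn by (intro member_le_sum) auto
    then show False using mp(3) assms(4) unfolding x_def by simp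
  next
    case False
    then have vx: "\<not> v < x + 1" using ne x_def by auto
    then have "w v \<le> Wsum n w - LS n w (x+1)" unfolding LS_compl using assms nn by (intro member_le_sum) auto
    moreover have "LS n w (x+1) = LS n w x + w x" using mp(1,2) unfolding x_def by (intro LS_Suc) auto
    ultimately show False using mp(4) assms(4) unfolding x_def by simp
  qed
qed

lemma S_child:
  assumes "0 < p" "p < 1" "0 < w v"
  shows "S n (upd p w q (v < q)) v = (Same n w v q - w v) / w v + p/(1-p) * (S n w v - (Same n w v q - w v) / w v)"
    "S n (upd p w q (\<not> v < q)) v = (Same n w v q - w v) / w v + (1-p)/p * (S n w v - (Same n w v q - w v) / w v)"
proof -
  define Sm where "Sm = Same n w v q"
  define W where "W = Wsum n w"
  have W1: "Wsum n (upd p w q (v < q)) = (1-p) * Sm + p * (W - Sm)"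
    unfolding Wsum_upd Sm_def Same_def W_def by auto
  have W2: "Wsum n (upd p w q (\<not> v < q)) = p * Sm + (1-p) * (W - Sm)"
    unfolding Wsum_upd Sm_def Same_def W_def by auto
  have u1: "upd p w q (v < q) v = (1-p) * w v" unfolding upd_def by simp
  have u2: "upd p w q (\<not> v < q) v = p * w v" unfolding upd_def by simp
  have t: "S n w v - (Sm - w v) / w v = (W - Sm) / w v"
    unfolding S_def W_def using assms by (simp add: field_simps)
  show "S n (upd p w q (v < q)) v = (Same n w v q - w v) / w v + p/(1-p) * (S n w v - (Same n w v q - w v) / w v)"
    unfolding Sm_def[symmetric] t unfolding S_def W1 u1 using assms by (simp add: field_simps)
  show "S n (upd p w q (\<not> v < q)) v = (Same n w v q - w v) / w v + (1-p)/p * (S n w v - (Same n w v q - w v) / w v)"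
    unfolding Sm_def[symmetric] t unfolding S_def W2 u2 using assms by (simp add: field_simps)
qed

lemma avg_cond:
  assumes "1 \<le> n" "\<forall>u\<in>{1..n}. 0 < w u" "v \<in> {1..n}"
  shows "piw n w * Same n w v (qof n w True) + (1 - piw n w) * Same n w v (qof n w False) \<le> (Wsum n w + w v) / 2"
proof -
  define x where "x = med n w"
  define A where "A = LS n w x"
  define W where "W = Wsum n w"
  define B where "B = W - A - w x"
  define \<pi> where "\<pi> = piw n w"
  have nn: "\<forall>u\<in>{1..n}. 0 \<le> w u" using assms by auto
  note mp = med_props[OF assms(1) nn]
  have x: "1 \<le> x" "x \<le> n" using mp x_def by auto
  have wx: "0 < w x" using assms x by auto
  have pw: "\<pi> = (B - A + w x) / (2 * w x)" unfolding \<pi>_def piw_def x_def A_def B_def W_def Let_def by simp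
  have pwx: "\<pi> * w x = (B - A + w x) / 2" unfolding pw using wx by (simp add: field_simps)
  have LS1: "LS n w (x+1) = A + w x" unfolding A_def using x by (intro LS_Suc) auto
  have q1: "qof n w True = x + 1" and q0: "qof n w False = x" unfolding qof_def x_def by auto
  have wv0: "0 \<le> w v" using assms nn by auto
  consider "v < x" | "v = x" | "x < v" by linarith
  then show ?thesis
  proof cases
    case 1
    then have s1: "Same n w v (x+1) = A + w x" and s0: "Same n w v x = A"
      unfolding Same_def LS1 A_def by auto
    have "\<pi> * (A + w x) + (1 - \<pi>) * A = A + \<pi> * w x" by (simp add: algebra_simps)
    also have "\<dots> = W / 2" using pwx B_def by simp
    also have "\<dots> \<le> (W + w v) / 2" using wv0 by simp
    finally show ?thesis unfolding q1 q0 s1 s0 \<pi>_def[symmetric] W_def[symmetric] .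
  next
    case 2
    then have s1: "Same n w v (x+1) = A + w x" and s0: "Same n w v x = B + w x"
      unfolding Same_def LS1 A_def B_def W_def by auto
    have d0: "(\<pi> - 1/2) * (2 * w x) = 2 * (\<pi> * w x) - w x" by (simp add: algebra_simps)
    have d: "(\<pi> - 1/2) * (2 * w x) = B - A" unfolding d0 pwx by (simp add: field_simps)
    have "(\<pi> - 1/2) * (A - B) * (2 * w x) = (A - B) * ((\<pi> - 1/2) * (2 * w x))" by (simp only: ac_simps)
    also have "\<dots> = - ((A - B) * (A - B))" unfolding d by (simp add: algebra_simps)
    also have "\<dots> \<le> 0" by simp
    finally have "(\<pi> - 1/2) * (A - B) * (2 * w x) \<le> 0" .
    then have z: "(\<pi> - 1/2) * (A - B) \<le> 0" using wx by (simp add: mult_le_0_iff)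
    have e: "\<pi> * (A + w x) + (1 - \<pi>) * (B + w x) = w x + (A + B) / 2 + (\<pi> - 1/2) * (A - B)"
      by (simp add: field_simps)
    have e2: "w x + (A + B) / 2 = (W + w v) / 2" using 2 B_def by (simp add: field_simps)
    have "\<pi> * (A + w x) + (1 - \<pi>) * (B + w x) \<le> (W + w v) / 2"
      using e e2 z by (smt (verit))
    then show ?thesis unfolding q1 q0 s1 s0 \<pi>_def[symmetric] W_def[symmetric] .
  next
    case 3
    then have s1: "Same n w v (x+1) = B" and s0: "Same n w v x = B + w x"
      unfolding Same_def LS1 A_def B_def W_def by auto
    have "\<pi> * B + (1 - \<pi>) * (B + w x) = B + w x - \<pi> * w x" by (simp add: algebra_simps)
    also have "\<dots> = W / 2" using pwx B_def by simp
    also have "\<dots> \<le> (W + w v) / 2" using wv0 by simp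
    finally show ?thesis unfolding q1 q0 s1 s0 \<pi>_def[symmetric] W_def[symmetric] .
  qed
qed



lemma fail_bound:
  assumes p: "0 < p" "p < 1/2" and n: "2 \<le> n" and l: "0 < l" "l \<le> 1"
  shows "(\<forall>u\<in>{1..n}. 0 < w u) \<Longrightarrow> v \<in> {1..n} \<Longrightarrow> 1 - Ex p n k v w \<le> gfun p l ^ k * S n w v powr l"
proof (induction k arbitrary: w)
  case 0
  have wv: "0 < w v" using 0 by auto
  have E0: "Ex p n 0 v w = (if med n w = v then 1 else 0)" by (simp add: Ex_def)
  show ?case
  proof (cases "med n w = v")
    case True
    then show ?thesis using E0 by simp
  next
    case False
    then have "\<not> Wsum n w < 2 * w v" using med_eq[of n w v] 0 n by auto
    then have "1 \<le> S n w v" unfolding S_def using wv by (simp add: field_simps)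
    then have "1 \<le> S n w v powr l" using l by (intro ge_one_powr_ge_zero) auto
    then show ?thesis using E0 False by simp
  qed
next
  case (Suc k)
  note pos = Suc.prems(1) and vin = Suc.prems(2)
  have n1: "1 \<le> n" using n by simp
  define \<pi> where "\<pi> = piw n w"
  have pr: "0 \<le> \<pi>" "\<pi> \<le> 1" unfolding \<pi>_def using piw_range[OF n1 pos] by auto
  have wv: "0 < w v" using pos vin by auto
  define t where "t = S n w v"
  have tpos: "0 < t" unfolding t_def S_def using Wv_pos[OF n pos vin] wv by simp
  define e where "e = (\<lambda>b. (Same n w v (qof n w b) - w v) / w v)"
  define g where "g = gfun p l"
  have g0: "0 \<le> g" unfolding g_def using p gfun_nonneg by auto
  have p1: "p < 1" using p by simp
  have child: "1 - Fq p n k v w (qof n w b) \<le> g ^ k * ((1-p) * (e b + p/(1-p) * (t - e b)) powr l + p * (e b + (1-p)/p * (t - e b)) powr l)" for b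
  proof -
    define q where "q = qof n w b"
    have ih1: "1 - Ex p n k v (upd p w q (v < q)) \<le> g ^ k * S n (upd p w q (v < q)) v powr l"
      unfolding g_def using Suc.IH[OF upd_pos[OF p(1) p1 pos] vin] .
    have ih2: "1 - Ex p n k v (upd p w q (\<not> v < q)) \<le> g ^ k * S n (upd p w q (\<not> v < q)) v powr l"
      unfolding g_def using Suc.IH[OF upd_pos[OF p(1) p1 pos] vin] .
    have s1: "S n (upd p w q (v < q)) v = e b + p/(1-p) * (t - e b)"
      using S_child(1)[of p w v n q, OF p(1) p1 wv] unfolding e_def t_def q_def by simp
    have s2: "S n (upd p w q (\<not> v < q)) v = e b + (1-p)/p * (t - e b)"
      using S_child(2)[of p w v n q, OF p(1) p1 wv] unfolding e_def t_def q_def by simp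
    have "1 - Fq p n k v w q = (1-p) * (1 - Ex p n k v (upd p w q (v < q))) + p * (1 - Ex p n k v (upd p w q (\<not> v < q)))"
      unfolding Fq_def by (simp add: algebra_simps)
    also have "\<dots> \<le> (1-p) * (g ^ k * S n (upd p w q (v < q)) v powr l) + p * (g ^ k * S n (upd p w q (\<not> v < q)) v powr l)"
      using ih1 ih2 p by (intro add_mono mult_left_mono) auto
    also have "\<dots> = g ^ k * ((1-p) * (e b + p/(1-p) * (t - e b)) powr l + p * (e b + (1-p)/p * (t - e b)) powr l)"
      unfolding s1 s2 by (simp add: algebra_simps)
    finally show ?thesis unfolding q_def .
  qed
  have eb: "0 \<le> e b" "e b \<le> t" for b
  proof -
    have "w v \<le> Same n w v (qof n w b)" "Same n w v (qof n w b) \<le> Wsum n w"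
      using Same_bounds[OF pos vin] by auto
    then show "0 \<le> e b" "e b \<le> t" unfolding e_def t_def S_def using wv by (auto intro: divide_right_mono)
  qed
  have avg: "\<pi> * e True + (1 - \<pi>) * e False \<le> t / 2"
  proof -
    have a: "\<pi> * Same n w v (qof n w True) + (1 - \<pi>) * Same n w v (qof n w False) \<le> (Wsum n w + w v) / 2"
      unfolding \<pi>_def using avg_cond[OF n1 pos vin] .
    have "\<pi> * e True + (1 - \<pi>) * e False = (\<pi> * Same n w v (qof n w True) + (1 - \<pi>) * Same n w v (qof n w False) - w v) / w v"
      unfolding e_def using wv by (simp add: field_simps)
    also have "\<dots> \<le> ((Wsum n w + w v) / 2 - w v) / w v"
      using a wv by (intro divide_right_mono) auto
    also have "\<dots> = t / 2" unfolding t_def S_def using wv by (simp add: field_simps)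
    finally show ?thesis .
  qed
  have "1 - Ex p n (Suc k) v w = \<pi> * (1 - Fq p n k v w (qof n w True)) + (1 - \<pi>) * (1 - Fq p n k v w (qof n w False))"
    unfolding E_Suc[OF pr[unfolded \<pi>_def]] \<pi>_def by (simp add: algebra_simps)
  also have "\<dots> \<le> \<pi> * (g ^ k * ((1-p) * (e True + p/(1-p) * (t - e True)) powr l + p * (e True + (1-p)/p * (t - e True)) powr l))
     + (1 - \<pi>) * (g ^ k * ((1-p) * (e False + p/(1-p) * (t - e False)) powr l + p * (e False + (1-p)/p * (t - e False)) powr l))"
    using child pr by (intro add_mono mult_left_mono) auto
  also have "\<dots> = g ^ k * (\<pi> * ((1-p) * (e True + p/(1-p) * (t - e True)) powr l + p * (e True + (1-p)/p * (t - e True)) powr l)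
     + (1 - \<pi>) * ((1-p) * (e False + p/(1-p) * (t - e False)) powr l + p * (e False + (1-p)/p * (t - e False)) powr l))"
    by (simp add: algebra_simps)
  also have "\<dots> \<le> g ^ k * (gfun p l * t powr l)"
    using g0 by (intro mult_left_mono key_step) (use p l pr eb tpos avg in auto)
  also have "\<dots> = gfun p l ^ Suc k * S n w v powr l" unfolding g_def t_def by simp
  finally show ?case .
qed



lemma param_bound:
  fixes \<iota> K l0 N L :: real
  assumes i: "0 < \<iota>" and K: "0 < K" and l0: "0 < l0" "l0 * K \<le> \<iota> / 2" and N: "0 < N" and L: "0 < L"
  shows "(N + L / min l0 (sqrt (L/N))) / (\<iota> - min l0 (sqrt (L/N)) * K) + L / ln 2
     \<le> (N + (1 + 2*K/\<iota> + \<iota>/ln 2 + (1 + 2*K/\<iota>)/l0) * (sqrt (N * L) + L)) / \<iota>"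
proof -
  define l where "l = min l0 (sqrt (L/N))"
  define C' where "C' = 1 + 2*K/\<iota> + \<iota>/ln 2 + (1 + 2*K/\<iota>)/l0"
  define s where "s = sqrt (N * L)"
  have s0: "0 \<le> s" unfolding s_def using N L by simp
  have lp: "0 < l" unfolding l_def using l0 N L by simp
  have ll0: "l \<le> l0" unfolding l_def by simp
  have lK: "l * K \<le> \<iota> / 2" using ll0 K l0 by (meson dual_order.trans mult_right_mono less_imp_le)
  have a0: "0 < \<iota> - l * K" using lK i by simp
  define b where "b = 1 + 2 * l * K / \<iota>"
  have ba: "\<iota> \<le> b * (\<iota> - l * K)"
  proof -
    have "b * (\<iota> - l * K) = \<iota> + l * K * (1 - 2 * l * K / \<iota>)"
      unfolding b_def using i by (simp add: field_simps)
    moreover have "0 \<le> l * K * (1 - 2 * l * K / \<iota>)"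
    proof -
      have "2 * l * K / \<iota> \<le> 1" using lK i by (simp add: divide_le_eq)
      then show ?thesis using lp K by simp
    qed
    ultimately show ?thesis by simp
  qed
  have inv: "1 / (\<iota> - l * K) \<le> b / \<iota>"
    using ba a0 i by (simp add: divide_simps)
  have NL0: "0 \<le> N + L / l" using N L lp by simp
  have "(N + L / l) / (\<iota> - l * K) = (N + L / l) * (1 / (\<iota> - l * K))" by simp
  also have "\<dots> \<le> (N + L / l) * (b / \<iota>)" using inv NL0 by (rule mult_left_mono)
  also have "\<dots> = (N + L / l + 2 * K / \<iota> * (l * N) + 2 * K / \<iota> * L) / \<iota>"
    unfolding b_def using i lp by (simp add: field_simps)
  finally have X: "(N + L / l) / (\<iota> - l * K) \<le> (N + L / l + 2 * K / \<iota> * (l * N) + 2 * K / \<iota> * L) / \<iota>" .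
  have c1: "1 + 2*K/\<iota> \<le> C'" unfolding C'_def using i K l0 by simp
  have c2: "2*K/\<iota> + \<iota>/ln 2 \<le> C'" unfolding C'_def using i K l0 by simp
  have C0: "0 \<le> C'"
  proof -
    have "0 \<le> 2*K/\<iota>" using i K by simp
    then show ?thesis using c1 by linarith
  qed
  have c3: "(1 + 2*K/\<iota>)/l0 + 2*K/\<iota> + \<iota>/ln 2 \<le> C'" unfolding C'_def using i K l0 by simp
  have Z: "L / l + 2 * K / \<iota> * (l * N) + 2 * K / \<iota> * L + \<iota> * L / ln 2 \<le> C' * (s + L)"
  proof (cases "sqrt (L/N) \<le> l0")
    case True
    then have ld: "l = sqrt L / sqrt N" unfolding l_def by (simp add: real_sqrt_divide)
    have sN: "0 < sqrt N" and sL: "0 < sqrt L" using N L by auto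
    have e1: "L / l = s" unfolding ld s_def real_sqrt_mult using sN sL
      by (simp add: field_simps)
    have e2: "l * N = s" unfolding ld s_def real_sqrt_mult using sN sL
      by (simp add: field_simps)
    have "L / l + 2 * K / \<iota> * (l * N) + 2 * K / \<iota> * L + \<iota> * L / ln 2
        = (1 + 2*K/\<iota>) * s + (2*K/\<iota> + \<iota>/ln 2) * L"
      unfolding e1 e2 by (simp add: algebra_simps)
    also have "\<dots> \<le> C' * s + C' * L"
      using c1 c2 s0 L by (intro add_mono mult_right_mono) auto
    finally show ?thesis by (simp add: algebra_simps)
  next
    case False
    then have ld: "l = l0" unfolding l_def by simp
    have "sqrt (l0^2) < sqrt (L/N)" using False l0 by simp
    then have "l0^2 < L / N" by (simp only: real_sqrt_less_iff)
    then have "l0^2 * N < L" using N by (simp add: field_simps)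
    then have lN: "l0 * N \<le> L / l0" using l0 by (simp add: field_simps power2_eq_square)
    have "2 * K / \<iota> * (l0 * N) \<le> 2 * K / \<iota> * (L / l0)"
      using lN K i by (intro mult_left_mono) auto
    then have "L / l + 2 * K / \<iota> * (l * N) + 2 * K / \<iota> * L + \<iota> * L / ln 2
        \<le> L / l0 + 2 * K / \<iota> * (L / l0) + 2 * K / \<iota> * L + \<iota> * L / ln 2"
      unfolding ld by simp
    also have "\<dots> = ((1 + 2*K/\<iota>)/l0 + 2*K/\<iota> + \<iota>/ln 2) * L"
      using l0 i by (simp add: field_simps)
    also have "\<dots> \<le> C' * L" using c3 L by (intro mult_right_mono) auto
    also have "\<dots> \<le> C' * (s + L)" using s0 C0 by (intro mult_left_mono) auto
    finally show ?thesis .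
  qed
  have "(N + L / l) / (\<iota> - l * K) + L / ln 2
      \<le> (N + L / l + 2 * K / \<iota> * (l * N) + 2 * K / \<iota> * L) / \<iota> + (\<iota> * L / ln 2) / \<iota>"
    using X i by simp
  also have "\<dots> = (N + (L / l + 2 * K / \<iota> * (l * N) + 2 * K / \<iota> * L + \<iota> * L / ln 2)) / \<iota>"
    by (simp add: add_divide_distrib)
  also have "\<dots> \<le> (N + C' * (s + L)) / \<iota>"
    using Z i by (intro divide_right_mono) auto
  finally show ?thesis unfolding l_def C'_def s_def .
qed



theorem theorem4:
  fixes p :: real
  assumes "0 < p" and "p < 1/2"
  shows "\<exists>C > 0. \<forall>(\<delta>::real) (n::nat). 0 < \<delta> \<longrightarrow> \<delta> < 1/2 \<longrightarrow> 1 \<le> n \<longrightarrow>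
     (\<exists>D :: qtree pmf.
        (\<forall>T \<in> set_pmf D. real (depth T) \<le>
            (1 / I p) * (log 2 (real n)
               + C * sqrt (ln (real n) * ln (1 / \<delta>))
               + C * ln (1 / \<delta>)))
      \<and> (\<forall>v \<in> {1..n}. rand_succ_prob p v D \<ge> 1 - \<delta>))"
proof -
  note p = assms
  define \<iota> where "\<iota> = ln 2 - mu p"
  define M where "M = - ln p"
  define K where "K = M^2"
  define l0 where "l0 = min 1 (min (1/M) (\<iota>/(2*K)))"
  define C' where "C' = 1 + 2*K/\<iota> + \<iota>/ln 2 + (1 + 2*K/\<iota>)/l0"
  define C where "C = C' / ln 2"
  have i0: "0 < \<iota>" unfolding \<iota>_def using mu_lt[OF p] by simp
  have M0: "0 < M" unfolding M_def using p by simp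
  have K0: "0 < K" unfolding K_def using M0 by simp
  have l0p: "0 < l0" unfolding l0_def using M0 K0 i0 by simp
  have l0K: "l0 * K \<le> \<iota> / 2"
  proof -
    have "l0 \<le> \<iota>/(2*K)" unfolding l0_def by simp
    then have "l0 * K \<le> \<iota>/(2*K) * K" using K0 by (intro mult_right_mono) auto
    then show ?thesis using K0 by simp
  qed
  have l0M: "l0 \<le> 1/M" "l0 \<le> 1" unfolding l0_def by auto
  have Ip: "I p = \<iota> / ln 2" unfolding \<iota>_def using I_eq[OF p] by simp
  have C'1: "1 \<le> C'" unfolding C'_def using K0 i0 l0p by simp
  have Cp: "0 < C" unfolding C_def using C'1 by simp
  show ?thesis
  proof (intro exI[of _ C] conjI allI impI Cp)
    fix \<delta> :: real and n :: nat
    assume d0: "0 < \<delta>" and d1: "\<delta> < 1/2" and n1: "1 \<le> n"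
    define L where "L = ln (1 / \<delta>)"
    have L2: "ln 2 < L" unfolding L_def using d0 d1 by (simp add: field_simps)
    have "0 < ln (2::real)" by simp
    then have L0: "0 < L" using L2 by linarith
    have Ipos: "0 < I p" unfolding Ip using i0 by simp
    show "\<exists>D :: qtree pmf.
        (\<forall>T \<in> set_pmf D. real (depth T) \<le>
            (1 / I p) * (log 2 (real n) + C * sqrt (ln (real n) * ln (1 / \<delta>)) + C * ln (1 / \<delta>)))
      \<and> (\<forall>v \<in> {1..n}. rand_succ_prob p v D \<ge> 1 - \<delta>)"
    proof (cases "n = 1")
      case True
      show ?thesis
      proof (intro exI[of _ "return_pmf (Leaf 1)"] conjI ballI)
        fix T assume "T \<in> set_pmf (return_pmf (Leaf 1))"
        then have "T = Leaf 1" by simp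
        moreover have "0 \<le> (1 / I p) * (C * ln (1 / \<delta>))"
          using Ipos Cp L0 unfolding L_def by simp
        ultimately show "real (depth T) \<le> (1 / I p) * (log 2 (real n) + C * sqrt (ln (real n) * ln (1 / \<delta>)) + C * ln (1 / \<delta>))"
          using True by simp
      next
        fix v assume "v \<in> {1..n}"
        then have "v = 1" using True by simp
        then show "1 - \<delta> \<le> rand_succ_prob p v (return_pmf (Leaf 1))"
          unfolding rand_succ_prob_def using d0 by simp
      qed
    next
      case False
      then have n2: "2 \<le> n" using n1 by simp
      define N where "N = ln (real n)"
      have N0: "0 < N" unfolding N_def using n2 by simp
      define l where "l = min l0 (sqrt (L/N))"
      have lp: "0 < l" unfolding l_def using l0p L0 N0 by simp
      have ll0: "l \<le> l0" unfolding l_def by simp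
      have lK: "l * K \<le> \<iota> / 2" using ll0 K0 l0K by (meson dual_order.trans mult_right_mono less_imp_le)
      have a0: "0 < \<iota> - l * K" using lK i0 by simp
      define X where "X = (N + L / l) / (\<iota> - l * K)"
      have X0: "0 \<le> X" unfolding X_def using N0 L0 lp a0 by simp
      define k where "k = nat \<lceil>X\<rceil>"
      have kX: "X \<le> real k" unfolding k_def by (rule real_nat_ceiling_ge)
      have kX1: "real k \<le> X + 1"
      proof -
        have "0 \<le> \<lceil>X\<rceil>" using X0 by simp
        then have "real k = of_int \<lceil>X\<rceil>" unfolding k_def by simp
        then show ?thesis by simp
      qed
      define w1 where "w1 = (\<lambda>u::nat. 1::real)"
      show ?thesis
      proof (intro exI[of _ "rt p n k w1"] conjI ballI)
        fix T assume "T \<in> set_pmf (rt p n k w1)"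
        then have dT: "depth T = k" by (rule rt_depth)
        have "1 \<le> L / ln 2" using L2 by (simp add: le_divide_eq)
        then have "real k \<le> X + L / ln 2"
          using kX1 by linarith
        also have "\<dots> \<le> (N + C' * (sqrt (N * L) + L)) / \<iota>"
          unfolding X_def l_def C'_def by (rule param_bound[OF i0 K0 l0p l0K N0 L0])
        also have "\<dots> = (1 / I p) * (log 2 (real n) + C * sqrt (ln (real n) * ln (1 / \<delta>)) + C * ln (1 / \<delta>))"
        proof -
          have ln2: "0 < ln (2::real)" by simp
          show ?thesis unfolding Ip C_def N_def[symmetric] L_def[symmetric] log_def using ln2 i0 by (simp add: field_simps)
        qed
        finally show "real (depth T) \<le> (1 / I p) * (log 2 (real n) + C * sqrt (ln (real n) * ln (1 / \<delta>)) + C * ln (1 / \<delta>))"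
          using dT by simp
      next
        fix v assume vin: "v \<in> {1..n}"
        have pos: "\<forall>u\<in>{1..n}. 0 < w1 u" unfolding w1_def by simp
        have l1: "l \<le> 1" using ll0 l0M by simp
        have fb: "1 - Ex p n k v w1 \<le> gfun p l ^ k * S n w1 v powr l"
          using fail_bound[OF p n2 lp l1 pos vin] .
        have Sv: "S n w1 v = real n - 1" unfolding S_def Wsum_def w1_def by simp
        have lM: "l * (- ln p) \<le> 1"
        proof -
          have "l \<le> 1/M" using ll0 l0M by simp
          then have "l * M \<le> 1/M * M" using M0 by (intro mult_right_mono) auto
          then show ?thesis unfolding M_def using M0 M_def by simp
        qed
        have gb: "gfun p l \<le> exp (- l * \<iota> + l^2 * K)"
          using g_bound[OF p lp lM] unfolding \<iota>_def K_def M_def by simp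
        have gk: "gfun p l ^ k \<le> exp (real k * (- l * \<iota> + l^2 * K))"
          unfolding exp_of_nat_mult using gb gfun_nonneg[OF p] by (intro power_mono) auto
        have Sp: "S n w1 v powr l \<le> exp (l * N)"
        proof -
          have "S n w1 v powr l \<le> real n powr l" unfolding Sv using n2 lp by (intro powr_mono2) auto
          also have "\<dots> = exp (l * N)" unfolding N_def powr_def using n2 by simp
          finally show ?thesis .
        qed
        have "1 - Ex p n k v w1 \<le> exp (real k * (- l * \<iota> + l^2 * K)) * exp (l * N)"
          using fb gk Sp gfun_nonneg[OF p] by (meson mult_mono order_trans powr_ge_zero exp_ge_zero zero_le_power)
        also have "\<dots> = exp (real k * (- l * \<iota> + l^2 * K) + l * N)" by (simp add: exp_add)
        also have "\<dots> \<le> exp (- L)"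
        proof -
          have "N + L / l \<le> real k * (\<iota> - l * K)"
            using kX a0 unfolding X_def by (simp add: divide_le_eq)
          then have "l * (N + L / l) \<le> l * (real k * (\<iota> - l * K))"
            using lp by (intro mult_left_mono) auto
          then have "l * N + L \<le> real k * l * (\<iota> - l * K)"
            using lp by (simp add: algebra_simps)
          then have "real k * (- l * \<iota> + l^2 * K) + l * N \<le> - L"
            by (simp add: algebra_simps power2_eq_square)
          then show ?thesis by simp
        qed
        also have "\<dots> = \<delta>" unfolding L_def using d0 by (simp add: ln_div)
        finally have "1 - Ex p n k v w1 \<le> \<delta>" .
        then show "1 - \<delta> \<le> rand_succ_prob p v (rt p n k w1)"
          unfolding rand_succ_prob_def Ex_def by simp
      qed
    qed
  qed
qed

end
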